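(* (1) Let $C\otimes\mathbb Q=\{t^r\mid r\in\mathbb Q\}$ denote the additive group $\mathbb Q$ written multiplicatively. Make $\mathbb Q[\![x]\!]$ a $C\otimes\mathbb Q$-module by letting $t^r$ act as multiplication by $(1+x)^r=\sum_{n\ge 0}\binom{r}{n}x^n$, where $\binom{r}{n}=r(r-1)\cdots(r-n+1)/n!$. Let $\Lambda^2(\mathbb Q[\![x]\!])$ be the exterior square over $\mathbb Q$ with the diagonal action $t^r(f\wedge g)=(1+x)^rf\wedge(1+x)^rg$, and let $(\Lambda^2(\mathbb Q[\![x]\!]))_{C\otimes\mathbb Q}$ be its module of coinvariants. Then the kernel of the $\mathbb Q$-linear map $\theta_{\mathbb Q}:\mathbb Q[\![x]\!]\to(\Lambda^2(\mathbb Q[\![x]\!]))_{C\otimes\mathbb Q}$, $\theta_{\mathbb Q}(f)=f\wedge 1$, is countable. (2) Let $p$ be an odd prime and $C=\langle t\rangle$ the infinite cyclic group. Make $\mathbb Z/p[\![x]\!]$ a $C$-module by letting $t$ act as multiplication by $1+x$. Let $\Lambda^2(\mathbb Z/p[\![x]\!])$ be the exterior square over $\mathbb Z/p$ with the diagonal action of $C$, and $(\Lambda^2(\mathbb Z/p[\![x]\!]))_C$ its coinvariants. Then the kernel of the map $\theta_{\mathbb Z/p}:\mathbb Z/p[\![x]\!]\to(\Lambda^2(\mathbb Z/p[\![x]\!]))_C$, $\theta_{\mathbb Z/p}(f)=f\wedge 1$, is countable.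
   Context: For a group $H$ acting on a module $M$, the coinvariants $M_H$ are the quotient of $M$ by the subgroup generated by $hm-m$, $h\in H$, $m\in M$. *)

theory Defs
  imports "HOL-Computational_Algebra.Formal_Power_Series" "HOL-Library.Countable_Set"
    "Berlekamp_Zassenhaus.Finite_Field"
begin

text \<open>Free 'k-vector space on pairs (a,b) of elements of V, as finitely supported functions;
  delta a b is the basis vector standing for the formal symbol a \<and> b.\<close>
definition delta :: "'v \<Rightarrow> 'v \<Rightarrow> ('v \<times> 'v \<Rightarrow> 'k::zero_neq_one)" where
  "delta a b = (\<lambda>z. if z = (a, b) then 1 else 0)"

inductive_set kspan :: "('a \<Rightarrow> 'k::comm_ring_1) set \<Rightarrow> ('a \<Rightarrow> 'k) set" for S where
  zero: "(\<lambda>_. 0) \<in> kspan S"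
| gen: "u \<in> S \<Longrightarrow> u \<in> kspan S"
| add: "u \<in> kspan S \<Longrightarrow> v \<in> kspan S \<Longrightarrow> (\<lambda>z. u z + v z) \<in> kspan S"
| smult: "u \<in> kspan S \<Longrightarrow> (\<lambda>z. c * u z) \<in> kspan S"

text \<open>Relations defining the exterior square \<Lambda>^2_k(k[[x]]) as a quotient of the free
  vector space: bilinearity and alternation (a \<and> a = 0).\<close>
definition ext2_rels :: "('k::field fps \<times> 'k fps \<Rightarrow> 'k) set" where
  "ext2_rels =
     {(\<lambda>z. delta (a + a') b z - delta a b z - delta a' b z) | a a' b. True}
   \<union> {(\<lambda>z. delta a (b + b') z - delta a b z - delta a b' z) | a b b'. True}
   \<union> {(\<lambda>z. delta (fps_const c * a) b z - c * delta a b z) | c a b. True}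
   \<union> {(\<lambda>z. delta a (fps_const c * b) z - c * delta a b z) | c a b. True}
   \<union> {delta a a | a. True}"

text \<open>Generators h\<cdot>w - w of the coinvariant relations, for the diagonal action of a group H
  acting on k[[x]] by multiplication by the power series in H, with w = a \<and> b.\<close>
definition coinv_rels :: "'k::field fps set \<Rightarrow> ('k fps \<times> 'k fps \<Rightarrow> 'k) set" where
  "coinv_rels H = {(\<lambda>z. delta (h * a) (h * b) z - delta a b z) | h a b. h \<in> H}"

text \<open>Kernel of theta : k[[x]] \<rightarrow> (\<Lambda>^2 k[[x]])_H, f \<mapsto> f \<and> 1: those f whose symbol
  f \<and> 1 lies in the span of the exterior-square relations and the coinvariant relations.\<close>
definition theta_ker :: "'k::field fps set \<Rightarrow> 'k fps set" where
  "theta_ker H = {f. delta f 1 \<in> kspan (ext2_rels \<union> coinv_rels H)}"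

text \<open>The group C \<otimes> Q acting on Q[[x]]: t^r acts as (1+x)^r = fps_binomial r.\<close>
definition CQ_action :: "rat fps set" where
  "CQ_action = range (\<lambda>r::rat. fps_binomial r)"

definition C_action :: "'k::field fps set" where
  "C_action = range (\<lambda>n::int. if 0 \<le> n then (1 + fps_X) ^ nat n
                                else inverse ((1 + fps_X) ^ nat (- n)))"

end

theory Submission
  imports Defs "HOL-Computational_Algebra.Formal_Laurent_Series"
begin

definition fgen :: "'k::field fls set" where
  "fgen = insert (fps_to_fls fps_X)
     {fps_to_fls g | g n m. 0 < n \<and> of_nat n \<noteq> (0::'k) \<and> g $ 0 = 1 \<and> g ^ n = (1 + fps_X) ^ m}"

inductive_set Kset :: "'k::field fls set" where
  gen: "a \<in> fgen \<Longrightarrow> a \<in> Kset"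
| const: "fls_const c \<in> Kset"
| add: "a \<in> Kset \<Longrightarrow> b \<in> Kset \<Longrightarrow> a + b \<in> Kset"
| neg: "a \<in> Kset \<Longrightarrow> - a \<in> Kset"
| mult: "a \<in> Kset \<Longrightarrow> b \<in> Kset \<Longrightarrow> a * b \<in> Kset"
| inv: "a \<in> Kset \<Longrightarrow> inverse a \<in> Kset"

lemma Kset_0: "0 \<in> Kset" using Kset.const[of 0] by simp
lemma Kset_1: "1 \<in> Kset" using Kset.const[of 1] by simp
lemma Kset_diff: "a \<in> Kset \<Longrightarrow> b \<in> Kset \<Longrightarrow> a - b \<in> Kset"
  using Kset.add[OF _ Kset.neg] by (metis diff_conv_add_uminus)
lemma Kset_divide: "a \<in> Kset \<Longrightarrow> b \<in> Kset \<Longrightarrow> a / b \<in> Kset"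
  using Kset.mult[OF _ Kset.inv] by (metis divide_inverse)
lemma Kset_power: "a \<in> Kset \<Longrightarrow> a ^ n \<in> Kset"
  by (induction n) (auto intro: Kset_1 Kset.mult)

typedef (overloaded) ('k::field) Kf = "Kset :: 'k fls set"
  using Kset_0 by blast

setup_lifting type_definition_Kf

instantiation Kf :: (field) field
begin
lift_definition zero_Kf :: "'a Kf" is 0 by (rule Kset_0)
lift_definition one_Kf :: "'a Kf" is 1 by (rule Kset_1)
lift_definition plus_Kf :: "'a Kf \<Rightarrow> 'a Kf \<Rightarrow> 'a Kf" is "(+)" by (rule Kset.add)
lift_definition minus_Kf :: "'a Kf \<Rightarrow> 'a Kf \<Rightarrow> 'a Kf" is "(-)" by (rule Kset_diff)
lift_definition uminus_Kf :: "'a Kf \<Rightarrow> 'a Kf" is uminus by (rule Kset.neg)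
lift_definition times_Kf :: "'a Kf \<Rightarrow> 'a Kf \<Rightarrow> 'a Kf" is "(*)" by (rule Kset.mult)
lift_definition inverse_Kf :: "'a Kf \<Rightarrow> 'a Kf" is inverse by (rule Kset.inv)
lift_definition divide_Kf :: "'a Kf \<Rightarrow> 'a Kf \<Rightarrow> 'a Kf" is "(/)" by (rule Kset_divide)
instance
  by standard (transfer; simp add: field_simps)+
end

definition scaleK :: "'k::field Kf \<Rightarrow> 'k fls \<Rightarrow> 'k fls" where
  "scaleK c v = Rep_Kf c * v"

lemma vs_scaleK: "vector_space scaleK"
  by unfold_locales
     (auto simp: scaleK_def plus_Kf.rep_eq times_Kf.rep_eq one_Kf.rep_eq ring_distribs)

lemma vs_self: "vector_space ((*) :: 'k::field Kf \<Rightarrow> _)"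
  by unfold_locales (auto simp: ring_distribs)

lemma vsp: "vector_space_pair scaleK ((*) :: 'k::field Kf \<Rightarrow> _)"
  unfolding vector_space_pair_def using vs_scaleK vs_self by blast

lemma functional_exists:
  fixes v :: "'k::field fls"
  assumes "v \<notin> Kset"
  shows "\<exists>\<phi>. Vector_Spaces.linear scaleK ((*) :: 'k Kf \<Rightarrow> _) \<phi> \<and> \<phi> 1 = 0 \<and> \<phi> v = 1"
proof -
  interpret p: vector_space_pair scaleK "(*) :: 'k Kf \<Rightarrow> _" by (rule vsp)
  have i1: "p.vs1.independent {1::'k fls}"
    by (simp add: p.vs1.independent_insert)
  have "v \<notin> p.vs1.span {1}"
  proof
    assume "v \<in> p.vs1.span {1}"
    then obtain k where "v = scaleK k 1" by (auto simp: p.vs1.span_singleton)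
    then have "v = Rep_Kf k" by (simp add: scaleK_def)
    then show False using assms Rep_Kf by auto
  qed
  with i1 have ind: "p.vs1.independent {v, 1}" by (simp add: p.vs1.independent_insertI)
  have v1: "v \<noteq> 1" using assms Kset_1 by auto
  let ?f = "p.construct {v, 1} (\<lambda>w. if w = v then 1 else 0)"
  have "Vector_Spaces.linear scaleK (*) ?f" by (rule p.linear_construct[OF ind])
  moreover have "?f 1 = 0" using p.construct_basis[OF ind, of 1] v1 by simp
  moreover have "?f v = 1" using p.construct_basis[OF ind, of v] by simp
  ultimately show ?thesis by blast
qed

lemma functional_exists1:
  "\<exists>\<psi>. Vector_Spaces.linear scaleK ((*) :: 'k::field Kf \<Rightarrow> _) \<psi> \<and> \<psi> 1 = 1"
proof -
  interpret p: vector_space_pair scaleK "(*) :: 'k Kf \<Rightarrow> _" by (rule vsp)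
  have i1: "p.vs1.independent {1::'k fls}"
    by (simp add: p.vs1.independent_insert)
  let ?f = "p.construct {1} (\<lambda>w. 1)"
  have "Vector_Spaces.linear scaleK (*) ?f" by (rule p.linear_construct[OF i1])
  moreover have "?f 1 = 1" using p.construct_basis[OF i1, of 1] by simp
  ultimately show ?thesis by blast
qed


definition emb :: "'k::field \<Rightarrow> 'k Kf" where
  "emb c = Abs_Kf (fls_const c)"

lemma Rep_emb: "Rep_Kf (emb c) = fls_const c"
  unfolding emb_def by (rule Abs_Kf_inverse) (rule Kset.const)

lemma emb_0[simp]: "emb 0 = 0"
  by (simp add: Rep_Kf_inject[symmetric] Rep_emb zero_Kf.rep_eq)
lemma emb_1[simp]: "emb 1 = 1"
  by (simp add: Rep_Kf_inject[symmetric] Rep_emb one_Kf.rep_eq)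
lemma emb_add: "emb (a + b) = emb a + emb b"
  by (simp add: Rep_Kf_inject[symmetric] Rep_emb plus_Kf.rep_eq fls_plus_const)
lemma emb_mult: "emb (a * b) = emb a * emb b"
  by (simp add: Rep_Kf_inject[symmetric] Rep_emb times_Kf.rep_eq)
lemma emb_uminus: "emb (- a) = - emb a"
  by (simp add: Rep_Kf_inject[symmetric] Rep_emb uminus_Kf.rep_eq)
lemma emb_diff: "emb (a - b) = emb a - emb b"
  using emb_add[of a "-b"] by (simp add: emb_uminus)

lemma sum_delta:
  fixes B :: "'k::field fps \<times> 'k fps \<Rightarrow> 'k Kf"
  assumes "finite F" "(a, b) \<in> F"
  shows "(\<Sum>z\<in>F. emb (delta a b z) * B z) = B (a, b)"
proof -
  have "\<And>z. emb (delta a b z) * B z = (if z = (a, b) then B (a, b) else 0)"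
    by (simp add: delta_def)
  then show ?thesis using assms by (simp add: sum.delta)
qed

definition Pgood :: "('k::field fps \<times> 'k fps \<Rightarrow> 'k Kf) \<Rightarrow> ('k fps \<times> 'k fps \<Rightarrow> 'k) \<Rightarrow> bool" where
  "Pgood B w \<longleftrightarrow> (\<exists>F. finite F \<and> (\<forall>F'. finite F' \<and> F \<subseteq> F' \<longrightarrow> (\<Sum>z\<in>F'. emb (w z) * B z) = 0))"

lemma kspan_good:
  assumes "w \<in> kspan S" "\<And>r. r \<in> S \<Longrightarrow> Pgood B r"
  shows "Pgood B w"
  using assms(1)
proof induction
  case zero
  show ?case unfolding Pgood_def by (rule exI[of _ "{}"]) simp
next
  case (gen u)
  then show ?case using assms(2) by blast
next
  case (add u v)
  then obtain F1 F2 where F1: "finite F1" "\<forall>F'. finite F' \<and> F1 \<subseteq> F' \<longrightarrow> (\<Sum>z\<in>F'. emb (u z) * B z) = 0"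
    and F2: "finite F2" "\<forall>F'. finite F' \<and> F2 \<subseteq> F' \<longrightarrow> (\<Sum>z\<in>F'. emb (v z) * B z) = 0"
    unfolding Pgood_def by blast
  show ?case unfolding Pgood_def
  proof (intro exI[of _ "F1 \<union> F2"] conjI allI impI)
    fix F' assume "finite F' \<and> F1 \<union> F2 \<subseteq> F'"
    then show "(\<Sum>z\<in>F'. emb (u z + v z) * B z) = 0"
      using F1 F2 by (simp add: emb_add distrib_right sum.distrib)
  qed (use F1 F2 in simp)
next
  case (smult u c)
  then obtain F1 where F1: "finite F1" "\<forall>F'. finite F' \<and> F1 \<subseteq> F' \<longrightarrow> (\<Sum>z\<in>F'. emb (u z) * B z) = 0"
    unfolding Pgood_def by blast
  show ?case unfolding Pgood_def
  proof (intro exI[of _ "F1"] conjI allI impI)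
    fix F' assume "finite F' \<and> F1 \<subseteq> F'"
    then show "(\<Sum>z\<in>F'. emb (c * u z) * B z) = 0"
      using F1 by (simp add: emb_mult mult.assoc flip: sum_distrib_left)
  qed (use F1 in simp)
qed

lemma good3:
  fixes B :: "'k::field fps \<times> 'k fps \<Rightarrow> 'k Kf"
  assumes "B p1 - B p2 - B p3 = 0"
  shows "Pgood B (\<lambda>z. delta (fst p1) (snd p1) z - delta (fst p2) (snd p2) z - delta (fst p3) (snd p3) z)"
  unfolding Pgood_def
proof (intro exI[of _ "{p1, p2, p3}"] conjI allI impI)
  fix F' assume F': "finite F' \<and> {p1, p2, p3} \<subseteq> F'"
  have "(\<Sum>z\<in>F'. emb (delta (fst p1) (snd p1) z - delta (fst p2) (snd p2) z - delta (fst p3) (snd p3) z) * B z)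
     = (\<Sum>z\<in>F'. emb (delta (fst p1) (snd p1) z) * B z) - (\<Sum>z\<in>F'. emb (delta (fst p2) (snd p2) z) * B z)
       - (\<Sum>z\<in>F'. emb (delta (fst p3) (snd p3) z) * B z)"
    by (simp add: emb_diff left_diff_distrib sum_subtractf)
  also have "\<dots> = B p1 - B p2 - B p3"
    using F' sum_delta[of F' "fst p1" "snd p1" B] sum_delta[of F' "fst p2" "snd p2" B]
      sum_delta[of F' "fst p3" "snd p3" B] by simp
  finally show "(\<Sum>z\<in>F'. emb (delta (fst p1) (snd p1) z - delta (fst p2) (snd p2) z - delta (fst p3) (snd p3) z) * B z) = 0"
    using assms by simp
qed simp

lemma good2:
  fixes B :: "'k::field fps \<times> 'k fps \<Rightarrow> 'k Kf"
  assumes "B p1 - emb c * B p2 = 0"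
  shows "Pgood B (\<lambda>z. delta (fst p1) (snd p1) z - c * delta (fst p2) (snd p2) z)"
  unfolding Pgood_def
proof (intro exI[of _ "{p1, p2}"] conjI allI impI)
  fix F' assume F': "finite F' \<and> {p1, p2} \<subseteq> F'"
  have "(\<Sum>z\<in>F'. emb (delta (fst p1) (snd p1) z - c * delta (fst p2) (snd p2) z) * B z)
     = (\<Sum>z\<in>F'. emb (delta (fst p1) (snd p1) z) * B z) - emb c * (\<Sum>z\<in>F'. emb (delta (fst p2) (snd p2) z) * B z)"
    by (simp add: emb_diff emb_mult left_diff_distrib sum_subtractf sum_distrib_left mult.assoc)
  also have "\<dots> = B p1 - emb c * B p2"
    using F' sum_delta[of F' "fst p1" "snd p1" B] sum_delta[of F' "fst p2" "snd p2" B] by simp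
  finally show "(\<Sum>z\<in>F'. emb (delta (fst p1) (snd p1) z - c * delta (fst p2) (snd p2) z) * B z) = 0"
    using assms by simp
qed simp

lemma good1:
  fixes B :: "'k::field fps \<times> 'k fps \<Rightarrow> 'k Kf"
  assumes "B p1 = 0"
  shows "Pgood B (delta (fst p1) (snd p1))"
  unfolding Pgood_def
proof (intro exI[of _ "{p1}"] conjI allI impI)
  fix F' assume F': "finite F' \<and> {p1} \<subseteq> F'"
  then show "(\<Sum>z\<in>F'. emb (delta (fst p1) (snd p1) z) * B z) = 0"
    using sum_delta[of F' "fst p1" "snd p1" B] assms by simp
qed simp

lemma good_d2:
  fixes B :: "'k::field fps \<times> 'k fps \<Rightarrow> 'k Kf"
  assumes "B p1 - B p2 = 0"
  shows "Pgood B (\<lambda>z. delta (fst p1) (snd p1) z - delta (fst p2) (snd p2) z)"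
  unfolding Pgood_def
proof (intro exI[of _ "{p1, p2}"] conjI allI impI)
  fix F' assume F': "finite F' \<and> {p1, p2} \<subseteq> F'"
  have "(\<Sum>z\<in>F'. emb (delta (fst p1) (snd p1) z - delta (fst p2) (snd p2) z) * B z)
     = (\<Sum>z\<in>F'. emb (delta (fst p1) (snd p1) z) * B z) - (\<Sum>z\<in>F'. emb (delta (fst p2) (snd p2) z) * B z)"
    by (simp add: emb_diff left_diff_distrib sum_subtractf)
  also have "\<dots> = B p1 - B p2"
    using F' sum_delta[of F' "fst p1" "snd p1" B] sum_delta[of F' "fst p2" "snd p2" B] by simp
  finally show "(\<Sum>z\<in>F'. emb (delta (fst p1) (snd p1) z - delta (fst p2) (snd p2) z) * B z) = 0"
    using assms by simp
qed simp


definition gi :: "'k::field fps" where "gi = - (fps_X * inverse (1 + fps_X))"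

lemma gi0[simp]: "gi $ 0 = 0" by (simp add: gi_def)

definition iota :: "'k::field fps \<Rightarrow> 'k fps" where "iota b = b oo gi"

lemma iota_add: "iota (a + b) = iota a + iota b"
  by (simp add: iota_def fps_compose_add_distrib)
lemma iota_mult: "iota (a * b) = iota a * iota b"
  by (simp add: iota_def fps_compose_mult_distrib)
lemma iota_const: "iota (fps_const c) = fps_const c"
  by (simp add: iota_def)
lemma iota_1[simp]: "iota 1 = 1"
  by (simp add: iota_def)
lemma iota_constmult: "iota (fps_const c * a) = fps_const c * iota a"
  by (simp add: iota_mult iota_const)

lemma iota_1X: "(1 + fps_X) * iota (1 + fps_X :: 'k::field fps) = 1"
proof -
  have i: "inverse (1 + fps_X) * (1 + fps_X :: 'k fps) = 1" by (rule inverse_mult_eq_1) simp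
  have e: "iota (1 + fps_X :: 'k fps) = 1 - fps_X * inverse (1 + fps_X)"
    by (simp add: iota_def fps_compose_add_distrib gi_def)
  have "(1 + fps_X) * iota (1 + fps_X :: 'k fps) = (1 + fps_X) - fps_X * (inverse (1 + fps_X) * (1 + fps_X))"
    unfolding e by (simp add: algebra_simps)
  also have "\<dots> = 1" using i by simp
  finally show ?thesis .
qed

lemma kernel_sub:
  fixes H :: "'k::field fps set"
  assumes H: "\<And>h. h \<in> H \<Longrightarrow> fps_to_fls h \<in> Kset \<and> h * iota h = 1"
  shows "theta_ker H \<subseteq> {f. fps_to_fls f \<in> Kset}"
proof
  fix f assume f: "f \<in> theta_ker H"
  show "f \<in> {f. fps_to_fls f \<in> Kset}"
  proof (rule ccontr)
    assume nf: "f \<notin> {f. fps_to_fls f \<in> Kset}"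
    then obtain \<phi> where lphi: "Vector_Spaces.linear scaleK ((*) :: 'k Kf \<Rightarrow> _) \<phi>"
      and phi1: "\<phi> 1 = 0" and phif: "\<phi> (fps_to_fls f) = 1"
      using functional_exists[of "fps_to_fls f"] by auto
    obtain \<psi> where lpsi: "Vector_Spaces.linear scaleK ((*) :: 'k Kf \<Rightarrow> _) \<psi>"
      and psi1: "\<psi> 1 = 1"
      using functional_exists1 by auto
    have lp_add: "\<phi> (x + y) = \<phi> x + \<phi> y" and lp_scale: "\<phi> (scaleK c x) = c * \<phi> x" for x y c
    proof -
      interpret lp: Vector_Spaces.linear scaleK "(*) :: 'k Kf \<Rightarrow> _" \<phi> by (rule lphi)
      show "\<phi> (x + y) = \<phi> x + \<phi> y" by (rule lp.add)
      show "\<phi> (scaleK c x) = c * \<phi> x" by (rule lp.scale)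
    qed
    have lq_add: "\<psi> (x + y) = \<psi> x + \<psi> y" and lq_scale: "\<psi> (scaleK c x) = c * \<psi> x" for x y c
    proof -
      interpret lq: Vector_Spaces.linear scaleK "(*) :: 'k Kf \<Rightarrow> _" \<psi> by (rule lpsi)
      show "\<psi> (x + y) = \<psi> x + \<psi> y" by (rule lq.add)
      show "\<psi> (scaleK c x) = c * \<psi> x" by (rule lq.scale)
    qed
    define Phi where "Phi a = \<phi> (fps_to_fls a)" for a
    define Psi where "Psi a = \<psi> (fps_to_fls (iota a))" for a
    define B where "B z = Phi (fst z) * Psi (snd z) - Phi (snd z) * Psi (fst z)" for z
    have sc: "fps_to_fls (fps_const c * a) = scaleK (emb c) (fps_to_fls a)" for c a
      by (simp add: scaleK_def Rep_emb fls_times_fps_to_fls)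
    have Phi_add: "Phi (a + b) = Phi a + Phi b" for a b
      by (simp add: Phi_def lp_add)
    have Psi_add: "Psi (a + b) = Psi a + Psi b" for a b
      by (simp add: Psi_def iota_add lq_add)
    have Phi_c: "Phi (fps_const c * a) = emb c * Phi a" for c a
      by (simp add: Phi_def sc lp_scale)
    have Psi_c: "Psi (fps_const c * a) = emb c * Psi a" for c a
      by (simp add: Psi_def iota_constmult sc lq_scale)
    define U where "U (h::'k fps) = Abs_Kf (fps_to_fls h)" for h
    define V where "V (h::'k fps) = Abs_Kf (fps_to_fls (iota h))" for h
    have Hprops: "Phi (h * a) = U h * Phi a \<and> Psi (h * a) = V h * Psi a \<and> U h * V h = 1"
      if h: "h \<in> H" for h a
    proof -
      have h1: "fps_to_fls h \<in> Kset" and h2: "h * iota h = 1" using H[OF h] by auto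
      have h3: "fps_to_fls h * fps_to_fls (iota h) = 1"
        using h2 by (metis fls_times_fps_to_fls fps_to_fls_eq_1_iff)
      then have "fps_to_fls (iota h) = inverse (fps_to_fls h)"
        by (metis inverse_unique)
      then have h4: "fps_to_fls (iota h) \<in> Kset" using h1 by (simp add: Kset.inv)
      have e1: "fps_to_fls (h * a) = scaleK (U h) (fps_to_fls a)"
        by (simp add: U_def scaleK_def Abs_Kf_inverse[OF h1] fls_times_fps_to_fls)
      have e2: "fps_to_fls (iota (h * a)) = scaleK (V h) (fps_to_fls (iota a))"
        by (simp add: V_def scaleK_def Abs_Kf_inverse[OF h4] fls_times_fps_to_fls iota_mult)
      have e3: "U h * V h = 1"
        by (simp add: U_def V_def Rep_Kf_inject[symmetric] times_Kf.rep_eq one_Kf.rep_eq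
            Abs_Kf_inverse[OF h1] Abs_Kf_inverse[OF h4] h3)
      show ?thesis
        using e1 e2 e3 by (simp add: Phi_def Psi_def lp_scale lq_scale)
    qed
    have good: "Pgood B r" if r: "r \<in> ext2_rels \<union> coinv_rels H" for r
    proof -
      from r consider
        (a1) a a' b where "r = (\<lambda>z. delta (a + a') b z - delta a b z - delta a' b z)"
      | (a2) a b b' where "r = (\<lambda>z. delta a (b + b') z - delta a b z - delta a b' z)"
      | (a3) c a b where "r = (\<lambda>z. delta (fps_const c * a) b z - c * delta a b z)"
      | (a4) c a b where "r = (\<lambda>z. delta a (fps_const c * b) z - c * delta a b z)"
      | (a5) a where "r = delta a a"
      | (a6) h a b where "h \<in> H" "r = (\<lambda>z. delta (h * a) (h * b) z - delta a b z)"
        unfolding ext2_rels_def coinv_rels_def by blast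
      then show ?thesis
      proof cases
        case a1
        have "B (a + a', b) - B (a, b) - B (a', b) = 0"
          unfolding B_def prod.sel Phi_add Psi_add by (simp add: algebra_simps)
        from good3[of B "(a + a', b)" "(a, b)" "(a', b)", OF this] show ?thesis using a1 by simp
      next
        case a2
        have "B (a, b + b') - B (a, b) - B (a, b') = 0"
          unfolding B_def prod.sel Phi_add Psi_add by (simp add: algebra_simps)
        from good3[of B "(a, b + b')" "(a, b)" "(a, b')", OF this] show ?thesis using a2 by simp
      next
        case a3
        have "B (fps_const c * a, b) - emb c * B (a, b) = 0"
          unfolding B_def prod.sel Phi_c Psi_c by (simp add: algebra_simps)
        from good2[of B "(fps_const c * a, b)" c "(a, b)", OF this] show ?thesis using a3 by simp
      next
        case a4
        have "B (a, fps_const c * b) - emb c * B (a, b) = 0"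
          unfolding B_def prod.sel Phi_c Psi_c by (simp add: algebra_simps)
        from good2[of B "(a, fps_const c * b)" c "(a, b)", OF this] show ?thesis using a4 by simp
      next
        case a5
        have "B (a, a) = 0" by (simp add: B_def)
        from good1[of B "(a, a)", OF this] show ?thesis using a5 by simp
      next
        case a6
        have ha: "Phi (h * a) = U h * Phi a" "Psi (h * a) = V h * Psi a" and uv: "U h * V h = 1"
          using Hprops[OF a6(1), of a] by auto
        have hb: "Phi (h * b) = U h * Phi b" "Psi (h * b) = V h * Psi b"
          using Hprops[OF a6(1), of b] by auto
        have "B (h * a, h * b) = (U h * V h) * (Phi a * Psi b - Phi b * Psi a)"
          unfolding B_def prod.sel ha hb by (simp add: algebra_simps)
        then have "B (h * a, h * b) - B (a, b) = 0" by (simp add: uv B_def)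
        from good_d2[of B "(h * a, h * b)" "(a, b)", OF this] show ?thesis using a6 by simp
      qed
    qed
    have "delta f 1 \<in> kspan (ext2_rels \<union> coinv_rels H)" using f by (simp add: theta_ker_def)
    then have "Pgood B (delta f 1)" using kspan_good good by blast
    then obtain F where F: "finite F" "\<forall>F'. finite F' \<and> F \<subseteq> F' \<longrightarrow> (\<Sum>z\<in>F'. emb (delta f 1 z) * B z) = 0"
      unfolding Pgood_def by blast
    then have "(\<Sum>z\<in>insert (f, 1) F. emb (delta f 1 z) * B z) = 0" by auto
    then have "B (f, 1) = 0" using sum_delta[of "insert (f,1) F" f 1 B] F(1) by simp
    moreover have "B (f, 1) = 1"
      by (simp add: B_def Phi_def Psi_def phi1 phif psi1)
    ultimately show False by simp
  qed
qed


lemma root_unique: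
  fixes g h :: "'k::field fps"
  assumes "g ^ n = h ^ n" "g $ 0 = 1" "h $ 0 = 1" "of_nat n \<noteq> (0::'k)"
  shows "g = h"
proof -
  have "(g - h) * (\<Sum>i<n. h^(n - Suc i) * g^i) = 0"
    using assms(1) by (simp flip: power_diff_sumr2)
  moreover have "(\<Sum>i<n. h^(n - Suc i) * g^i) $ 0 = of_nat n"
    using assms(2,3) by (simp add: fps_sum_nth fps_nth_power_0)
  then have "(\<Sum>i<n. h^(n - Suc i) * g^i) \<noteq> 0" using assms(4) by auto
  ultimately show ?thesis by simp
qed

lemma countable_subsingleton:
  assumes "\<And>x y. x \<in> A \<Longrightarrow> y \<in> A \<Longrightarrow> x = y"
  shows "countable A"
proof (cases "A = {}")
  case False
  then obtain x where "x \<in> A" by blast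
  with assms have "A \<subseteq> {x}" by blast
  then show ?thesis by (rule countable_subset) simp
qed simp

lemma countable_fgen: "countable (fgen :: 'k::field fls set)"
proof -
  let ?S = "\<lambda>n m. fps_to_fls ` {g :: 'k fps. 0 < n \<and> of_nat n \<noteq> (0::'k) \<and> g $ 0 = 1 \<and> g ^ n = (1 + fps_X) ^ m}"
  have "fgen \<subseteq> insert (fps_to_fls fps_X) (\<Union>n. \<Union>m. ?S n m)"
    unfolding fgen_def by blast
  moreover have "countable (?S n m)" for n m
    by (rule countable_subsingleton) (clarsimp, rule_tac n=n in root_unique, auto)
  ultimately show ?thesis by (meson countable_UN countable_insert countable_subset UNIV_I countableI_type)
qed

primrec lev :: "nat \<Rightarrow> 'k::field fls set" where
  "lev 0 = fgen \<union> range fls_const"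
| "lev (Suc n) = lev n \<union> (\<lambda>(a, b). a + b) ` (lev n \<times> lev n) \<union> (\<lambda>(a, b). a * b) ` (lev n \<times> lev n)
     \<union> uminus ` lev n \<union> inverse ` lev n"

lemma lev_mono: "n \<le> m \<Longrightarrow> lev n \<subseteq> lev m"
  by (rule lift_Suc_mono_le[of lev]) auto

lemma countable_lev:
  assumes "countable (UNIV :: 'k::field set)"
  shows "countable (lev n :: 'k fls set)"
  by (induction n) (use assms countable_fgen in auto)

lemma Kset_lev: "a \<in> Kset \<Longrightarrow> \<exists>n. a \<in> lev n"
proof (induction rule: Kset.induct)
  case (gen a) then show ?case by (intro exI[of _ 0]) simp
next
  case (const c) then show ?case by (intro exI[of _ 0]) simp
next
  case (add a b)
  then obtain n m where "a \<in> lev n" "b \<in> lev m" by blast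
  then have "a \<in> lev (max n m)" "b \<in> lev (max n m)" using lev_mono[of n "max n m"] lev_mono[of m "max n m"] by auto
  then show ?case by (intro exI[of _ "Suc (max n m)"]) force
next
  case (neg a)
  then obtain n where "a \<in> lev n" by blast
  then show ?case by (intro exI[of _ "Suc n"]) force
next
  case (mult a b)
  then obtain n m where "a \<in> lev n" "b \<in> lev m" by blast
  then have "a \<in> lev (max n m)" "b \<in> lev (max n m)" using lev_mono[of n "max n m"] lev_mono[of m "max n m"] by auto
  then show ?case by (intro exI[of _ "Suc (max n m)"]) force
next
  case (inv a)
  then obtain n where "a \<in> lev n" by blast
  then show ?case by (intro exI[of _ "Suc n"]) force
qed

lemma countable_Kset:
  assumes "countable (UNIV :: 'k::field set)"
  shows "countable (Kset :: 'k fls set)"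
proof -
  have "Kset \<subseteq> (\<Union>n. lev n :: 'k fls set)" using Kset_lev by blast
  then show ?thesis using countable_lev[OF assms] by (meson countable_UN countable_subset UNIV_I countableI_type)
qed

lemma countable_theta_ker:
  fixes H :: "'k::field fps set"
  assumes "countable (UNIV :: 'k set)"
    and H: "\<And>h. h \<in> H \<Longrightarrow> fps_to_fls h \<in> Kset \<and> h * iota h = 1"
  shows "countable (theta_ker H)"
proof -
  have "fps_to_fls ` theta_ker H \<subseteq> Kset" using kernel_sub[OF H] by blast
  then have "countable (fps_to_fls ` theta_ker H)"
    using countable_Kset[OF assms(1)] countable_subset by blast
  moreover have "inj_on fps_to_fls (theta_ker H)" by (simp add: inj_on_def)
  ultimately show ?thesis by (rule countable_image_inj_on)
qed


lemma iota_power: "iota (a ^ n) = iota a ^ n"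
  by (induction n) (simp_all add: iota_mult)

lemma inv_unique_fps: "(x :: 'k::field fps) * y = 1 \<Longrightarrow> x * z = 1 \<Longrightarrow> y = z"
  by (metis mult.assoc mult.commute mult_1_right)

lemma T_inverse:
  fixes h :: "'k::field fps"
  assumes "h * iota h = 1" "h $ 0 \<noteq> 0" "fps_to_fls h \<in> Kset"
  shows "fps_to_fls (inverse h) \<in> Kset \<and> inverse h * iota (inverse h) = 1"
proof
  show "fps_to_fls (inverse h) \<in> Kset"
    using assms(2,3) fls_inverse_fps_to_fls[of h] Kset.inv by fastforce
  have "iota h * iota (inverse h) = 1"
    using assms(2) by (simp flip: iota_mult add: inverse_mult_eq_1')
  then have "iota (inverse h) = h" using assms(1) inv_unique_fps[of "iota h"] by (metis mult.commute)
  then show "inverse h * iota (inverse h) = 1" using assms(2) by (simp add: inverse_mult_eq_1)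
qed

lemma fls_1X: "fps_to_fls (1 + fps_X :: 'k::field fps) \<in> Kset"
proof -
  have "fps_to_fls (fps_X :: 'k fps) \<in> Kset" by (rule Kset.gen) (simp add: fgen_def)
  then show ?thesis using Kset.add[OF Kset_1] by simp
qed

lemma T_pow:
  "fps_to_fls ((1 + fps_X :: 'k::field fps) ^ k) \<in> Kset \<and> (1 + fps_X) ^ k * iota ((1 + fps_X :: 'k fps) ^ k) = 1"
proof
  show "fps_to_fls ((1 + fps_X :: 'k::field fps) ^ k) \<in> Kset"
    unfolding fps_to_fls_power by (rule Kset_power[OF fls_1X])
  have "(1 + fps_X) ^ k * iota ((1 + fps_X :: 'k fps) ^ k) = ((1 + fps_X) * iota (1 + fps_X :: 'k fps)) ^ k"
    by (simp add: iota_power power_mult_distrib)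
  then show "(1 + fps_X) ^ k * iota ((1 + fps_X :: 'k fps) ^ k) = 1" by (simp add: iota_1X)
qed

lemma C_action_ok:
  "h \<in> (C_action :: 'k::field fps set) \<Longrightarrow> fps_to_fls h \<in> Kset \<and> h * iota h = 1"
  unfolding C_action_def
proof clarify
  fix n :: int
  show "fps_to_fls (if 0 \<le> n then (1 + fps_X :: 'k fps) ^ nat n else inverse ((1 + fps_X) ^ nat (- n))) \<in> Kset \<and>
    (if 0 \<le> n then (1 + fps_X) ^ nat n else inverse ((1 + fps_X) ^ nat (- n))) *
    iota (if 0 \<le> n then (1 + fps_X :: 'k fps) ^ nat n else inverse ((1 + fps_X) ^ nat (- n))) = 1"
  proof (cases "0 \<le> n")
    case True then show ?thesis using T_pow by simp
  next
    case False
    have nz: "((1 + fps_X :: 'k fps) ^ nat (- n)) $ 0 \<noteq> 0" by (simp add: fps_nth_power_0)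
    note p = T_pow[of "nat (-n)", where 'k='k]
    from T_inverse[OF conjunct2[OF p] nz conjunct1[OF p]] show ?thesis using False by simp
  qed
qed

abbreviation Tb :: "rat \<Rightarrow> bool" where
  "Tb s \<equiv> fps_binomial s * iota (fps_binomial s) = 1"

lemma E_neg: "fps_binomial s * fps_binomial (- s) = (1 :: rat fps)"
  by (simp flip: fps_binomial_add_mult)

lemma Tb_add: "Tb s \<Longrightarrow> Tb t \<Longrightarrow> Tb (s + t)"
  by (simp add: fps_binomial_add_mult iota_mult) (metis mult.assoc mult.left_commute mult_1_right)

lemma Tb_iota: "Tb s \<Longrightarrow> iota (fps_binomial s) = fps_binomial (- s)"
  using inv_unique_fps E_neg by blast

lemma Tb_neg: "Tb s \<Longrightarrow> Tb (- s)"
proof -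
  assume T: "Tb s"
  have "iota (fps_binomial (- s)) * iota (fps_binomial s) = 1"
    by (simp flip: iota_mult add: mult.commute E_neg)
  then show "Tb (- s)" using Tb_iota[OF T] by (simp add: mult.commute)
qed

lemma Tb_nat: "Tb (of_nat n)"
proof (induction n)
  case 0 then show ?case by simp
next
  case (Suc n)
  have "Tb 1" using iota_1X by (simp add: fps_binomial_1)
  from Tb_add[OF this Suc] show ?case by (simp add: add.commute)
qed

lemma Tb_int: "Tb (of_int m)"
proof (cases "0 \<le> m")
  case True
  then have "(of_int m :: rat) = of_nat (nat m)" by simp
  then show ?thesis using Tb_nat by metis
next
  case False
  then have "(of_int m :: rat) = - of_nat (nat (- m))" by simp
  then show ?thesis using Tb_neg[OF Tb_nat] by metis
qed

lemma rat_repr: "\<exists>a::int. \<exists>b::nat. 0 < b \<and> (r::rat) = of_int a / of_nat b"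
proof -
  obtain a d where q: "quotient_of r = (a, d)" by (cases "quotient_of r")
  then have "d > 0" by (rule quotient_of_denom_pos)
  moreover have "r = of_int a / of_int d" by (rule quotient_of_div[OF q])
  ultimately show ?thesis by (intro exI[of _ a] exI[of _ "nat d"]) simp
qed

lemma E0: "fps_binomial r $ 0 = 1" by simp

lemma iotaE0: "iota (fps_binomial r) $ 0 = 1"
  by (simp add: iota_def)

lemma Tb_rat: "Tb r"
proof -
  obtain a :: int and b :: nat where b: "0 < b" and r: "r = of_int a / of_nat b"
    using rat_repr by blast
  have br: "of_nat b * r = of_int a" using b by (simp add: r)
  have br': "of_nat b * (- r) = - of_int a" using br by simp
  have "iota (fps_binomial r) ^ b = iota (fps_binomial (of_int a))"
    by (simp only: iota_power[symmetric] fps_binomial_power br)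
  also have "\<dots> = fps_binomial (- of_int a)" by (rule Tb_iota[OF Tb_int])
  also have "\<dots> = fps_binomial (- r) ^ b" by (simp only: fps_binomial_power br')
  finally have eq: "iota (fps_binomial r) ^ b = fps_binomial (- r) ^ b" .
  have "iota (fps_binomial r) = fps_binomial (- r)"
    by (rule root_unique[OF eq iotaE0]) (use b in simp_all)
  then show ?thesis using E_neg by simp
qed

lemma E_fgen:
  assumes "0 < b" "of_nat b * (r::rat) = of_int a" "0 \<le> a"
  shows "fps_to_fls (fps_binomial r) \<in> Kset"
proof -
  have a: "(of_int a :: rat) = of_nat (nat a)" using assms(3) by simp
  have "fps_binomial r ^ b = (1 + fps_X) ^ nat a"
  proof -
    have "fps_binomial (of_int a :: rat) = (1 + fps_X) ^ nat a"
      using assms(3) fps_binomial_of_nat[of "nat a", where 'a=rat] by simp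
    then show ?thesis by (simp add: fps_binomial_power assms(2))
  qed
  then have "\<exists>g n m. fps_to_fls (fps_binomial r) = fps_to_fls g \<and> 0 < n \<and> of_nat n \<noteq> (0::rat) \<and> g $ 0 = 1
      \<and> g ^ n = (1 + fps_X) ^ m"
    using assms(1) by (intro exI[of _ "fps_binomial r"] exI[of _ b] exI[of _ "nat a"]) simp
  then have "fps_to_fls (fps_binomial r) \<in> fgen" unfolding fgen_def by blast
  then show ?thesis by (rule Kset.gen)
qed

lemma CQ_ok: "h \<in> CQ_action \<Longrightarrow> fps_to_fls h \<in> Kset \<and> h * iota h = 1"
proof -
  assume "h \<in> CQ_action"
  then obtain r where h: "h = fps_binomial r" unfolding CQ_action_def by blast
  obtain a :: int and b :: nat where b: "0 < b" and r: "r = of_int a / of_nat b"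
    using rat_repr by blast
  have br: "of_nat b * r = of_int a" using b by (simp add: r)
  have br': "of_nat b * (- r) = of_int (- a)" using br by simp
  have "fps_to_fls (fps_binomial r) \<in> Kset"
  proof (cases "0 \<le> a")
    case True
    then show ?thesis using E_fgen[OF b br] by blast
  next
    case False
    have "fps_to_fls (fps_binomial (- r)) \<in> Kset"
      by (rule E_fgen[OF b br']) (use False in simp)
    moreover have "fps_to_fls (fps_binomial r) = inverse (fps_to_fls (fps_binomial (- r)))"
    proof -
      have "fps_to_fls (fps_binomial (- r)) * fps_to_fls (fps_binomial r) = 1"
        using E_neg[of r] by (simp add: mult.commute flip: fls_times_fps_to_fls)
      then show ?thesis by (rule inverse_unique[symmetric])
    qed
    ultimately show ?thesis by (simp add: Kset.inv)
  qed
  then show ?thesis using h Tb_rat by simp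
qed

theorem proposition2p1:
  shows "countable (theta_ker CQ_action)
       \<and> (CARD('p::prime_card) \<noteq> 2 \<longrightarrow> countable (theta_ker (C_action :: 'p mod_ring fps set)))"
proof
  show "countable (theta_ker CQ_action)"
    by (rule countable_theta_ker) (simp, rule CQ_ok)
  show "CARD('p::prime_card) \<noteq> 2 \<longrightarrow> countable (theta_ker (C_action :: 'p mod_ring fps set))"
    by (intro impI countable_theta_ker C_action_ok countable_finite) simp_all
qed

end
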